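(* Let $M$ be an infinite-horizon $\gamma$-discounted zero-sum NMG with $n$ players and let $\pi$ be an $\epsilon$-approximate Markov CCE of $M$. Let $\hat\pi$ be the product Markov policy obtained by marginalizing $\pi$ at each state, i.e. $\hat\pi_h(\mathbf a\mid s)=\prod_{i\in\mathcal N}\pi_{h,i}(a_i\mid s)$ where $\pi_{h,i}(\cdot\mid s)$ is the marginal of $\pi_h(\cdot\mid s)\in\Delta(\mathcal A)$ on $\mathcal A_i$. Then $\hat\pi$ is an $\frac{(n+1)\epsilon}{1-\gamma}$-approximate Markov NE of $M$. Similarly, for a finite-horizon ($H$-step) zero-sum NMG, marginalizing an $\epsilon$-approximate Markov CCE at each state and step yields an $(n+1)H\epsilon$-approximate Markov NE.
   Context: A Markov game has players $\mathcal N=[n]$, finite states $\mathcal S$, finite actions $\mathcal A=\prod_i\mathcal A_i$, transitions $\mathbb P_h$, bounded rewards $r_{h,i}$, discount $\gamma$ (infinite horizon: $H=\infty$, $\gamma<1$, time-independent $\mathbb P,r_i$; finite horizon: $H<\infty$). A joint Markov policy is $\pi=\{\pi_h:\mathcal S\to\Delta(\mathcal A)\}_h$ (possibly correlated); a product policy has $\pi_h(s)\in\prod_i\Delta(\mathcal A_i)$. $V^\pi_{h,i}(s)=\mathbb E_\pi[\sum_{h'\ge h}\gamma^{h'-h}r_{h',i}(s_{h'},\mathbf a_{h'})\mid s_h=s]$. For a player $i$ and a Markov policy $\mu_i$ of player $i$, $(\mu_i,\pi_{-i})$ means $i$ plays $\mu_i$ while the others play the marginal of $\pi$ on $\mathcal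 A_{-i}$ at each state and step. A joint Markov policy $\pi$ is an $\epsilon$-approximate Markov (perfect) CCE if $\max_i\max_{\mu_i}(V^{\mu_i,\pi_{-i}}_{h,i}(\rho)-V^\pi_{h,i}(\rho))\le\epsilon$ for all state distributions $\rho$ and all steps $h$ (where $V(\rho)=\mathbb E_{s\sim\rho}V(s)$); it is an $\epsilon$-approximate Markov (perfect) NE if moreover it is a product policy. A Markov game is a zero-sum NMG with respect to an undirected connected graph $(\mathcal N,\mathcal E_Q)$ (with $\mathcal E_{Q,i}$ the neighbors of $i$) if for every (sequence of) functions $V:\mathcal S\to\mathbb R$, the functions $Q_{h,i}^V(s,\mathbf a)=r_{h,i}(s,\mathbf a)+\gamma\sum_{s'}\mathbb P_h(s'\mid s,\mathbf a)V_{h+1}(s')$ can be written as $\sum_{j\in\mathcal E_{Q,i}}Q^V_{h,i,j}(s,a_i,a_j)$ for some functions $Q^V_{h,i,j}$, and for $V\equiv0$ these pairwise functions satisfy $\sum_i\sum_{j\in\mathcal E_{Q,i}}Q^{\mathbf 0}_{h,i,j}(s,a_i,a_j)=0$ for all $s,h,\mathbf a$. *)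

theory Defs
  imports "HOL-Probability.Probability"
begin

text \<open>
  Players form a finite type 'i (so n = CARD('i)); states form a
  finite type 's; every player i has a finite nonempty action set A i of elements
  of a type 'a. Steps are natural numbers (0-based); in the finite-horizon
  case the steps are 0, ..., H-1.
\<close>

definition joint_actions :: "('i \<Rightarrow> 'a set) \<Rightarrow> ('i \<Rightarrow> 'a) set" where
  "joint_actions A = {a. \<forall>i. a i \<in> A i}"

definition action_sets_ok :: "('i \<Rightarrow> 'a set) \<Rightarrow> bool" where
  "action_sets_ok A \<longleftrightarrow> (\<forall>i. finite (A i) \<and> A i \<noteq> {})"

definition joint_policy :: "('i \<Rightarrow> 'a set) \<Rightarrow> (nat \<Rightarrow> 's \<Rightarrow> ('i \<Rightarrow> 'a) pmf) \<Rightarrow> bool" where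
  "joint_policy A \<pi> \<longleftrightarrow> (\<forall>h s. set_pmf (\<pi> h s) \<subseteq> joint_actions A)"

definition player_policy :: "('i \<Rightarrow> 'a set) \<Rightarrow> 'i \<Rightarrow> (nat \<Rightarrow> 's \<Rightarrow> 'a pmf) \<Rightarrow> bool" where
  "player_policy A i \<mu> \<longleftrightarrow> (\<forall>h s. set_pmf (\<mu> h s) \<subseteq> A i)"

definition marg :: "('i \<Rightarrow> 'a) pmf \<Rightarrow> 'i \<Rightarrow> 'a pmf" where
  "marg p i = map_pmf (\<lambda>a. a i) p"

definition product_policy :: "(nat \<Rightarrow> 's \<Rightarrow> ('i::finite \<Rightarrow> 'a) pmf) \<Rightarrow> bool" where
  "product_policy \<pi> \<longleftrightarrow>
     (\<forall>h s. \<exists>p :: 'i \<Rightarrow> 'a pmf. \<pi> h s = Pi_pmf UNIV undefined p)"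

definition marginalize :: "(nat \<Rightarrow> 's \<Rightarrow> ('i::finite \<Rightarrow> 'a) pmf) \<Rightarrow> nat \<Rightarrow> 's \<Rightarrow> ('i \<Rightarrow> 'a) pmf" where
  "marginalize \<pi> h s = Pi_pmf UNIV undefined (marg (\<pi> h s))"

text \<open>(\<mu>_i, \<pi>_{-i}): player i plays \<mu>_i, independently the others play the marginal of
  \<pi> on A_{-i} (correlated among themselves).\<close>
definition deviate :: "'i \<Rightarrow> (nat \<Rightarrow> 's \<Rightarrow> 'a pmf) \<Rightarrow> (nat \<Rightarrow> 's \<Rightarrow> ('i \<Rightarrow> 'a) pmf)
    \<Rightarrow> nat \<Rightarrow> 's \<Rightarrow> ('i \<Rightarrow> 'a) pmf" where
  "deviate i \<mu> \<pi> h s = map_pmf (\<lambda>(b, a). a(i := b)) (pair_pmf (\<mu> h s) (\<pi> h s))"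

definition connected_graph :: "('i \<Rightarrow> 'i \<Rightarrow> bool) \<Rightarrow> bool" where
  "connected_graph E \<longleftrightarrow> (\<forall>i j. E i j \<longrightarrow> E j i) \<and> (\<forall>i. \<not> E i i) \<and> (\<forall>i j. E\<^sup>*\<^sup>* i j)"

fun state_dist_inf :: "('s \<Rightarrow> ('i \<Rightarrow> 'a) \<Rightarrow> 's pmf) \<Rightarrow> (nat \<Rightarrow> 's \<Rightarrow> ('i \<Rightarrow> 'a) pmf)
    \<Rightarrow> nat \<Rightarrow> 's pmf \<Rightarrow> nat \<Rightarrow> 's pmf" where
  "state_dist_inf P \<pi> h \<rho> 0 = \<rho>"
| "state_dist_inf P \<pi> h \<rho> (Suc t) =
     bind_pmf (state_dist_inf P \<pi> h \<rho> t) (\<lambda>s. bind_pmf (\<pi> (h + t) s) (\<lambda>a. P s a))"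

definition V_inf :: "('s \<Rightarrow> ('i \<Rightarrow> 'a) \<Rightarrow> 's pmf) \<Rightarrow> ('i \<Rightarrow> 's \<Rightarrow> ('i \<Rightarrow> 'a) \<Rightarrow> real) \<Rightarrow> real
    \<Rightarrow> (nat \<Rightarrow> 's \<Rightarrow> ('i \<Rightarrow> 'a) pmf) \<Rightarrow> 'i \<Rightarrow> nat \<Rightarrow> 's pmf \<Rightarrow> real" where
  "V_inf P r \<gamma> \<pi> i h \<rho> =
     (\<Sum>t. \<gamma> ^ t * measure_pmf.expectation (state_dist_inf P \<pi> h \<rho> t)
                    (\<lambda>s. measure_pmf.expectation (\<pi> (h + t) s) (\<lambda>a. r i s a)))"

definition zero_sum_NMG_inf :: "('i::finite \<Rightarrow> 'i \<Rightarrow> bool) \<Rightarrow> ('i \<Rightarrow> 'a set)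
    \<Rightarrow> ('s::finite \<Rightarrow> ('i \<Rightarrow> 'a) \<Rightarrow> 's pmf) \<Rightarrow> ('i \<Rightarrow> 's \<Rightarrow> ('i \<Rightarrow> 'a) \<Rightarrow> real) \<Rightarrow> real \<Rightarrow> bool" where
  "zero_sum_NMG_inf E A P r \<gamma> \<longleftrightarrow>
     action_sets_ok A \<and> 0 \<le> \<gamma> \<and> \<gamma> < 1 \<and> connected_graph E \<and>
     (\<forall>V :: 's \<Rightarrow> real. \<exists>Q :: 'i \<Rightarrow> 'i \<Rightarrow> 's \<Rightarrow> 'a \<Rightarrow> 'a \<Rightarrow> real.
        \<forall>i s a. a \<in> joint_actions A \<longrightarrow>
          r i s a + \<gamma> * (\<Sum>s'\<in>UNIV. pmf (P s a) s' * V s') =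
          (\<Sum>j\<in>{j. E i j}. Q i j s (a i) (a j))) \<and>
     (\<exists>Q :: 'i \<Rightarrow> 'i \<Rightarrow> 's \<Rightarrow> 'a \<Rightarrow> 'a \<Rightarrow> real.
        (\<forall>i s a. a \<in> joint_actions A \<longrightarrow> r i s a = (\<Sum>j\<in>{j. E i j}. Q i j s (a i) (a j))) \<and>
        (\<forall>s a. a \<in> joint_actions A \<longrightarrow> (\<Sum>i\<in>UNIV. \<Sum>j\<in>{j. E i j}. Q i j s (a i) (a j)) = 0))"

definition approx_CCE_inf :: "('i \<Rightarrow> 'a set) \<Rightarrow> ('s \<Rightarrow> ('i \<Rightarrow> 'a) \<Rightarrow> 's pmf)
    \<Rightarrow> ('i \<Rightarrow> 's \<Rightarrow> ('i \<Rightarrow> 'a) \<Rightarrow> real) \<Rightarrow> real \<Rightarrow> (nat \<Rightarrow> 's \<Rightarrow> ('i \<Rightarrow> 'a) pmf) \<Rightarrow> real \<Rightarrow> bool" where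
  "approx_CCE_inf A P r \<gamma> \<pi> \<epsilon> \<longleftrightarrow> joint_policy A \<pi> \<and>
     (\<forall>i \<mu> h \<rho>. player_policy A i \<mu> \<longrightarrow>
        V_inf P r \<gamma> (deviate i \<mu> \<pi>) i h \<rho> - V_inf P r \<gamma> \<pi> i h \<rho> \<le> \<epsilon>)"

definition approx_NE_inf :: "('i::finite \<Rightarrow> 'a set) \<Rightarrow> ('s \<Rightarrow> ('i \<Rightarrow> 'a) \<Rightarrow> 's pmf)
    \<Rightarrow> ('i \<Rightarrow> 's \<Rightarrow> ('i \<Rightarrow> 'a) \<Rightarrow> real) \<Rightarrow> real \<Rightarrow> (nat \<Rightarrow> 's \<Rightarrow> ('i \<Rightarrow> 'a) pmf) \<Rightarrow> real \<Rightarrow> bool" where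
  "approx_NE_inf A P r \<gamma> \<pi> \<epsilon> \<longleftrightarrow> approx_CCE_inf A P r \<gamma> \<pi> \<epsilon> \<and> product_policy \<pi>"

fun state_dist_fin :: "(nat \<Rightarrow> 's \<Rightarrow> ('i \<Rightarrow> 'a) \<Rightarrow> 's pmf) \<Rightarrow> (nat \<Rightarrow> 's \<Rightarrow> ('i \<Rightarrow> 'a) pmf)
    \<Rightarrow> nat \<Rightarrow> 's pmf \<Rightarrow> nat \<Rightarrow> 's pmf" where
  "state_dist_fin P \<pi> h \<rho> 0 = \<rho>"
| "state_dist_fin P \<pi> h \<rho> (Suc t) =
     bind_pmf (state_dist_fin P \<pi> h \<rho> t) (\<lambda>s. bind_pmf (\<pi> (h + t) s) (\<lambda>a. P (h + t) s a))"

definition V_fin :: "nat \<Rightarrow> (nat \<Rightarrow> 's \<Rightarrow> ('i \<Rightarrow> 'a) \<Rightarrow> 's pmf) \<Rightarrow> (nat \<Rightarrow> 'i \<Rightarrow> 's \<Rightarrow> ('i \<Rightarrow> 'a) \<Rightarrow> real)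
    \<Rightarrow> real \<Rightarrow> (nat \<Rightarrow> 's \<Rightarrow> ('i \<Rightarrow> 'a) pmf) \<Rightarrow> 'i \<Rightarrow> nat \<Rightarrow> 's pmf \<Rightarrow> real" where
  "V_fin H P r \<gamma> \<pi> i h \<rho> =
     (\<Sum>t<H - h. \<gamma> ^ t * measure_pmf.expectation (state_dist_fin P \<pi> h \<rho> t)
                    (\<lambda>s. measure_pmf.expectation (\<pi> (h + t) s) (\<lambda>a. r (h + t) i s a)))"

definition zero_sum_NMG_fin :: "nat \<Rightarrow> ('i::finite \<Rightarrow> 'i \<Rightarrow> bool) \<Rightarrow> ('i \<Rightarrow> 'a set)
    \<Rightarrow> (nat \<Rightarrow> 's::finite \<Rightarrow> ('i \<Rightarrow> 'a) \<Rightarrow> 's pmf) \<Rightarrow> (nat \<Rightarrow> 'i \<Rightarrow> 's \<Rightarrow> ('i \<Rightarrow> 'a) \<Rightarrow> real)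
    \<Rightarrow> real \<Rightarrow> bool" where
  "zero_sum_NMG_fin H E A P r \<gamma> \<longleftrightarrow>
     action_sets_ok A \<and> 0 \<le> \<gamma> \<and> \<gamma> \<le> 1 \<and> connected_graph E \<and>
     (\<forall>V :: nat \<Rightarrow> 's \<Rightarrow> real. \<exists>Q :: nat \<Rightarrow> 'i \<Rightarrow> 'i \<Rightarrow> 's \<Rightarrow> 'a \<Rightarrow> 'a \<Rightarrow> real.
        \<forall>h<H. \<forall>i s a. a \<in> joint_actions A \<longrightarrow>
          r h i s a + \<gamma> * (\<Sum>s'\<in>UNIV. pmf (P h s a) s' * V (Suc h) s') =
          (\<Sum>j\<in>{j. E i j}. Q h i j s (a i) (a j))) \<and>
     (\<exists>Q :: nat \<Rightarrow> 'i \<Rightarrow> 'i \<Rightarrow> 's \<Rightarrow> 'a \<Rightarrow> 'a \<Rightarrow> real.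
        (\<forall>h<H. \<forall>i s a. a \<in> joint_actions A \<longrightarrow> r h i s a = (\<Sum>j\<in>{j. E i j}. Q h i j s (a i) (a j))) \<and>
        (\<forall>h<H. \<forall>s a. a \<in> joint_actions A \<longrightarrow>
           (\<Sum>i\<in>UNIV. \<Sum>j\<in>{j. E i j}. Q h i j s (a i) (a j)) = 0))"

definition approx_CCE_fin :: "nat \<Rightarrow> ('i \<Rightarrow> 'a set) \<Rightarrow> (nat \<Rightarrow> 's \<Rightarrow> ('i \<Rightarrow> 'a) \<Rightarrow> 's pmf)
    \<Rightarrow> (nat \<Rightarrow> 'i \<Rightarrow> 's \<Rightarrow> ('i \<Rightarrow> 'a) \<Rightarrow> real) \<Rightarrow> real \<Rightarrow> (nat \<Rightarrow> 's \<Rightarrow> ('i \<Rightarrow> 'a) pmf) \<Rightarrow> real \<Rightarrow> bool" where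
  "approx_CCE_fin H A P r \<gamma> \<pi> \<epsilon> \<longleftrightarrow> joint_policy A \<pi> \<and>
     (\<forall>i \<mu> h \<rho>. player_policy A i \<mu> \<longrightarrow> h < H \<longrightarrow>
        V_fin H P r \<gamma> (deviate i \<mu> \<pi>) i h \<rho> - V_fin H P r \<gamma> \<pi> i h \<rho> \<le> \<epsilon>)"

definition approx_NE_fin :: "nat \<Rightarrow> ('i::finite \<Rightarrow> 'a set) \<Rightarrow> (nat \<Rightarrow> 's \<Rightarrow> ('i \<Rightarrow> 'a) \<Rightarrow> 's pmf)
    \<Rightarrow> (nat \<Rightarrow> 'i \<Rightarrow> 's \<Rightarrow> ('i \<Rightarrow> 'a) \<Rightarrow> real) \<Rightarrow> real \<Rightarrow> (nat \<Rightarrow> 's \<Rightarrow> ('i \<Rightarrow> 'a) pmf) \<Rightarrow> real \<Rightarrow> bool" where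
  "approx_NE_fin H A P r \<gamma> \<pi> \<epsilon> \<longleftrightarrow> approx_CCE_fin H A P r \<gamma> \<pi> \<epsilon> \<and> product_policy \<pi>"

end

theory Submission imports Defs begin

lemma E_bind:
  fixes f :: "'b \<Rightarrow> real"
  assumes fp: "finite (set_pmf p)" and fK: "\<And>x. x \<in> set_pmf p \<Longrightarrow> finite (set_pmf (K x))"
  shows "measure_pmf.expectation (bind_pmf p K) f =
         measure_pmf.expectation p (\<lambda>x. measure_pmf.expectation (K x) f)"
proof -
  define B where "B = (\<Union>x\<in>set_pmf p. set_pmf (K x))"
  have fB: "finite B" unfolding B_def by (rule finite_UN_I[OF fp fK])
  have "measure_pmf.expectation (bind_pmf p K) f = (\<Sum>y\<in>B. f y * pmf (bind_pmf p K) y)"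
    by (rule integral_measure_pmf_real[OF fB]) (auto simp: B_def)
  also have "\<dots> = (\<Sum>y\<in>B. f y * (\<Sum>x\<in>set_pmf p. pmf (K x) y * pmf p x))"
    by (intro sum.cong refl arg_cong2[where f="(*)"]) (simp add: pmf_bind integral_measure_pmf_real[OF fp])
  also have "\<dots> = (\<Sum>x\<in>set_pmf p. (\<Sum>y\<in>B. f y * pmf (K x) y) * pmf p x)"
    by (simp add: sum_distrib_left sum_distrib_right sum.swap[of _ B] mult.assoc)
  also have "\<dots> = (\<Sum>x\<in>set_pmf p. measure_pmf.expectation (K x) f * pmf p x)"
    by (intro sum.cong refl arg_cong2[where f="(*)"] integral_measure_pmf_real[OF fB, symmetric]) (auto simp: B_def)
  also have "\<dots> = measure_pmf.expectation p (\<lambda>x. measure_pmf.expectation (K x) f)"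
    by (rule integral_measure_pmf_real[symmetric]) (auto simp: fp)
  finally show ?thesis .
qed

definition Wf :: "(nat \<Rightarrow> 's \<Rightarrow> ('i \<Rightarrow> 'a) \<Rightarrow> 's pmf) \<Rightarrow> (nat \<Rightarrow> 'i \<Rightarrow> 's \<Rightarrow> ('i \<Rightarrow> 'a) \<Rightarrow> real)
    \<Rightarrow> real \<Rightarrow> (nat \<Rightarrow> 's \<Rightarrow> ('i \<Rightarrow> 'a) pmf) \<Rightarrow> 'i \<Rightarrow> nat \<Rightarrow> nat \<Rightarrow> 's pmf \<Rightarrow> real" where
  "Wf P r \<gamma> \<sigma> i T h \<rho> =
     (\<Sum>t<T. \<gamma> ^ t * measure_pmf.expectation (state_dist_fin P \<sigma> h \<rho> t)
                    (\<lambda>s. measure_pmf.expectation (\<sigma> (h + t) s) (\<lambda>a. r (h + t) i s a)))"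

lemma sd_Suc:
  "state_dist_fin P \<sigma> h \<rho> (Suc t) =
   state_dist_fin P \<sigma> (Suc h) (bind_pmf \<rho> (\<lambda>s. bind_pmf (\<sigma> h s) (P h s))) t"
  by (induction t) auto

lemma W_Suc:
  "Wf P r \<gamma> \<sigma> i (Suc T) h \<rho> =
     measure_pmf.expectation \<rho> (\<lambda>s. measure_pmf.expectation (\<sigma> h s) (\<lambda>a. r h i s a))
     + \<gamma> * Wf P r \<gamma> \<sigma> i T (Suc h) (bind_pmf \<rho> (\<lambda>s. bind_pmf (\<sigma> h s) (P h s)))"
  unfolding Wf_def sum.lessThan_Suc_shift
  by (simp add: sd_Suc sum_distrib_left mult.assoc del: state_dist_fin.simps(2))

lemma W_lin:
  fixes \<sigma> :: "nat \<Rightarrow> 's::finite \<Rightarrow> ('i \<Rightarrow> 'a) pmf"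
  assumes fin: "\<And>h s. finite (set_pmf (\<sigma> h s))"
  shows "Wf P r \<gamma> \<sigma> i T h \<rho> = measure_pmf.expectation \<rho> (\<lambda>s. Wf P r \<gamma> \<sigma> i T h (return_pmf s))"
proof (induction T arbitrary: h \<rho>)
  case 0
  then show ?case by (simp add: Wf_def)
next
  case (Suc T)
  define K where "K = (\<lambda>s. bind_pmf (\<sigma> h s) (P h s))"
  define g where "g = (\<lambda>s. measure_pmf.expectation (\<sigma> h s) (\<lambda>a. r h i s a))"
  define w where "w = (\<lambda>s. Wf P r \<gamma> \<sigma> i T (Suc h) (return_pmf s))"
  have "Wf P r \<gamma> \<sigma> i (Suc T) h \<rho> = measure_pmf.expectation \<rho> g + \<gamma> * Wf P r \<gamma> \<sigma> i T (Suc h) (bind_pmf \<rho> K)"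
    by (simp add: W_Suc K_def g_def)
  also have "Wf P r \<gamma> \<sigma> i T (Suc h) (bind_pmf \<rho> K) = measure_pmf.expectation (bind_pmf \<rho> K) w"
    using Suc.IH unfolding w_def by blast
  also have "\<dots> = measure_pmf.expectation \<rho> (\<lambda>s. measure_pmf.expectation (K s) w)"
    by (rule E_bind) auto
  also have "measure_pmf.expectation \<rho> g + \<gamma> * \<dots> =
      measure_pmf.expectation \<rho> (\<lambda>s. g s + \<gamma> * measure_pmf.expectation (K s) w)"
    by (simp add: integrable_measure_pmf_finite)
  also have "\<dots> = measure_pmf.expectation \<rho> (\<lambda>s. Wf P r \<gamma> \<sigma> i (Suc T) h (return_pmf s))"
  proof (intro Bochner_Integration.integral_cong refl)
    fix s
    have "Wf P r \<gamma> \<sigma> i (Suc T) h (return_pmf s) = g s + \<gamma> * Wf P r \<gamma> \<sigma> i T (Suc h) (K s)"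
      by (simp add: W_Suc K_def g_def bind_return_pmf)
    also have "Wf P r \<gamma> \<sigma> i T (Suc h) (K s) = measure_pmf.expectation (K s) w"
      using Suc.IH unfolding w_def by blast
    finally show "g s + \<gamma> * measure_pmf.expectation (K s) w = Wf P r \<gamma> \<sigma> i (Suc T) h (return_pmf s)" by simp
  qed
  finally show ?case .
qed

lemma E_sumQ:
  fixes p :: "('i \<Rightarrow> 'a) pmf" and F :: "('i \<Rightarrow> 'a) \<Rightarrow> real"
  assumes fJ: "finite J" and sp: "set_pmf p \<subseteq> J" and fN: "finite N"
    and dec: "\<forall>a\<in>J. F a = (\<Sum>j\<in>N. Q j (a i) (a j))"
  shows "measure_pmf.expectation p F =
     (\<Sum>j\<in>N. measure_pmf.expectation (map_pmf (\<lambda>a. (a i, a j)) p) (\<lambda>(x, y). Q j x y))"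
proof -
  have fp: "finite (set_pmf p)" using fJ sp finite_subset by blast
  have "measure_pmf.expectation p F = measure_pmf.expectation p (\<lambda>a. \<Sum>j\<in>N. Q j (a i) (a j))"
    using dec sp by (intro integral_cong_AE) (auto simp: AE_measure_pmf_iff)
  also have "\<dots> = (\<Sum>j\<in>N. measure_pmf.expectation p (\<lambda>a. Q j (a i) (a j)))"
    by (rule Bochner_Integration.integral_sum[where f="\<lambda>j a. Q j (a i) (a j)"]) (rule integrable_measure_pmf_finite[OF fp])
  finally show ?thesis by simp
qed

lemma step_eq:
  fixes p q :: "('i::finite \<Rightarrow> 'a) pmf" and F :: "('i \<Rightarrow> 'a) \<Rightarrow> real"
  assumes fJ: "finite J" and sp: "set_pmf p \<subseteq> J" and sq: "set_pmf q \<subseteq> J"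
    and mg: "\<forall>j. E i j \<longrightarrow> map_pmf (\<lambda>a. (a i, a j)) p = map_pmf (\<lambda>a. (a i, a j)) q"
    and dec: "\<forall>a\<in>J. F a = (\<Sum>j\<in>{j. E i j}. Q j (a i) (a j))"
  shows "measure_pmf.expectation p F = measure_pmf.expectation q F"
  using mg by (simp add: E_sumQ[OF fJ sp _ dec] E_sumQ[OF fJ sq _ dec])

lemma W_step:
  fixes \<sigma> :: "nat \<Rightarrow> 's::finite \<Rightarrow> ('i \<Rightarrow> 'a) pmf"
  assumes fin: "\<And>h s. finite (set_pmf (\<sigma> h s))"
  shows "Wf P r \<gamma> \<sigma> i (Suc T) h (return_pmf s) =
    measure_pmf.expectation (\<sigma> h s) (\<lambda>a. r h i s a + \<gamma> *
       (\<Sum>s'\<in>UNIV. pmf (P h s a) s' * Wf P r \<gamma> \<sigma> i T (Suc h) (return_pmf s')))"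
proof -
  define w where "w = (\<lambda>s. Wf P r \<gamma> \<sigma> i T (Suc h) (return_pmf s))"
  have "Wf P r \<gamma> \<sigma> i (Suc T) h (return_pmf s) = measure_pmf.expectation (\<sigma> h s) (\<lambda>a. r h i s a)
      + \<gamma> * Wf P r \<gamma> \<sigma> i T (Suc h) (bind_pmf (\<sigma> h s) (P h s))"
    by (simp add: W_Suc bind_return_pmf)
  also have "Wf P r \<gamma> \<sigma> i T (Suc h) (bind_pmf (\<sigma> h s) (P h s)) =
      measure_pmf.expectation (bind_pmf (\<sigma> h s) (P h s)) w"
    unfolding w_def by (rule W_lin[OF fin])
  also have "\<dots> = measure_pmf.expectation (\<sigma> h s) (\<lambda>a. measure_pmf.expectation (P h s a) w)"
    by (rule E_bind[OF fin]) simp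
  also have "\<dots> = measure_pmf.expectation (\<sigma> h s) (\<lambda>a. \<Sum>s'\<in>UNIV. pmf (P h s a) s' * w s')"
    by (intro Bochner_Integration.integral_cong refl)
       (subst integral_measure_pmf_real[where A=UNIV], auto simp: mult.commute)
  also have "measure_pmf.expectation (\<sigma> h s) (\<lambda>a. r h i s a) + \<gamma> * \<dots> =
     measure_pmf.expectation (\<sigma> h s) (\<lambda>a. r h i s a + \<gamma> * (\<Sum>s'\<in>UNIV. pmf (P h s a) s' * w s'))"
    by (simp add: integrable_measure_pmf_finite[OF fin])
  finally show ?thesis unfolding w_def .
qed

lemma w_eq:
  fixes \<sigma> \<tau> :: "nat \<Rightarrow> 's::finite \<Rightarrow> ('i::finite \<Rightarrow> 'a) pmf"
  assumes fJ: "finite J" and s\<sigma>: "\<And>h s. set_pmf (\<sigma> h s) \<subseteq> J" and s\<tau>: "\<And>h s. set_pmf (\<tau> h s) \<subseteq> J"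
    and mg: "\<And>h s j. E i j \<Longrightarrow> map_pmf (\<lambda>a. (a i, a j)) (\<sigma> h s) = map_pmf (\<lambda>a. (a i, a j)) (\<tau> h s)"
    and dec: "\<And>h s V. h < H \<Longrightarrow> \<exists>Q. \<forall>a\<in>J. r h i s a + \<gamma> * (\<Sum>s'\<in>UNIV. pmf (P h s a) s' * V s')
                 = (\<Sum>j\<in>{j. E i j}. Q j (a i) (a j))"
  shows "h + T \<le> H \<Longrightarrow> Wf P r \<gamma> \<sigma> i T h (return_pmf s) = Wf P r \<gamma> \<tau> i T h (return_pmf s)"
proof (induction T arbitrary: h s)
  case 0
  then show ?case by (simp add: Wf_def)
next
  case (Suc T)
  have f\<sigma>: "\<And>h s. finite (set_pmf (\<sigma> h s))" using s\<sigma> fJ finite_subset by blast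
  have f\<tau>: "\<And>h s. finite (set_pmf (\<tau> h s))" using s\<tau> fJ finite_subset by blast
  define V where "V = (\<lambda>s'. Wf P r \<gamma> \<tau> i T (Suc h) (return_pmf s'))"
  have IH: "\<And>s'. Wf P r \<gamma> \<sigma> i T (Suc h) (return_pmf s') = V s'"
    using Suc by (simp add: V_def)
  obtain Q where Q: "\<forall>a\<in>J. r h i s a + \<gamma> * (\<Sum>s'\<in>UNIV. pmf (P h s a) s' * V s')
                 = (\<Sum>j\<in>{j. E i j}. Q j (a i) (a j))"
    using dec[of h s V] Suc.prems by auto
  have "Wf P r \<gamma> \<sigma> i (Suc T) h (return_pmf s) =
    measure_pmf.expectation (\<sigma> h s) (\<lambda>a. r h i s a + \<gamma> * (\<Sum>s'\<in>UNIV. pmf (P h s a) s' * V s'))"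
    by (simp add: W_step[OF f\<sigma>] IH)
  also have "\<dots> = measure_pmf.expectation (\<tau> h s) (\<lambda>a. r h i s a + \<gamma> * (\<Sum>s'\<in>UNIV. pmf (P h s a) s' * V s'))"
    by (rule step_eq[where E=E and i=i and Q=Q and J=J]) (use fJ s\<sigma> s\<tau> mg Q in auto)
  also have "\<dots> = Wf P r \<gamma> \<tau> i (Suc T) h (return_pmf s)"
    by (simp add: W_step[OF f\<tau>] V_def)
  finally show ?case .
qed

lemma sd_inf_fin: "state_dist_inf P \<sigma> h \<rho> t = state_dist_fin (\<lambda>_. P) \<sigma> h \<rho> t"
  by (induction t) auto

lemma V_inf_W:
  "V_inf P r \<gamma> \<sigma> i h \<rho> =
    (\<Sum>t. Wf (\<lambda>_. P) (\<lambda>_. r) \<gamma> \<sigma> i (Suc t) h \<rho> - Wf (\<lambda>_. P) (\<lambda>_. r) \<gamma> \<sigma> i t h \<rho>)"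
  unfolding V_inf_def Wf_def by (simp add: sd_inf_fin)

lemma W_eq:
  fixes \<sigma> \<tau> :: "nat \<Rightarrow> 's::finite \<Rightarrow> ('i::finite \<Rightarrow> 'a) pmf"
  assumes fJ: "finite J" and s\<sigma>: "\<And>h s. set_pmf (\<sigma> h s) \<subseteq> J" and s\<tau>: "\<And>h s. set_pmf (\<tau> h s) \<subseteq> J"
    and mg: "\<And>h s j. E i j \<Longrightarrow> map_pmf (\<lambda>a. (a i, a j)) (\<sigma> h s) = map_pmf (\<lambda>a. (a i, a j)) (\<tau> h s)"
    and dec: "\<And>h s V. h < H \<Longrightarrow> \<exists>Q. \<forall>a\<in>J. r h i s a + \<gamma> * (\<Sum>s'\<in>UNIV. pmf (P h s a) s' * V s')
                 = (\<Sum>j\<in>{j. E i j}. Q j (a i) (a j))"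
    and hT: "h + T \<le> H"
  shows "Wf P r \<gamma> \<sigma> i T h \<rho> = Wf P r \<gamma> \<tau> i T h \<rho>"
proof -
  have f\<sigma>: "\<And>h s. finite (set_pmf (\<sigma> h s))" using s\<sigma> fJ finite_subset by blast
  have f\<tau>: "\<And>h s. finite (set_pmf (\<tau> h s))" using s\<tau> fJ finite_subset by blast
  show ?thesis
    by (subst W_lin[OF f\<sigma>], subst W_lin[OF f\<tau>])
       (simp add: w_eq[where J=J and E=E and H=H and P=P and r=r and \<gamma>=\<gamma>, OF fJ s\<sigma> s\<tau> mg dec hT])
qed

lemma V_eq_inf:
  fixes \<sigma> \<tau> :: "nat \<Rightarrow> 's::finite \<Rightarrow> ('i::finite \<Rightarrow> 'a) pmf"
  assumes fJ: "finite J" and s\<sigma>: "\<And>h s. set_pmf (\<sigma> h s) \<subseteq> J" and s\<tau>: "\<And>h s. set_pmf (\<tau> h s) \<subseteq> J"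
    and mg: "\<And>h s j. E i j \<Longrightarrow> map_pmf (\<lambda>a. (a i, a j)) (\<sigma> h s) = map_pmf (\<lambda>a. (a i, a j)) (\<tau> h s)"
    and dec: "\<forall>V :: 's \<Rightarrow> real. \<exists>Q :: 'i \<Rightarrow> 'i \<Rightarrow> 's \<Rightarrow> 'a \<Rightarrow> 'a \<Rightarrow> real.
        \<forall>i s a. a \<in> J \<longrightarrow>
          r i s a + \<gamma> * (\<Sum>s'\<in>UNIV. pmf (P s a) s' * V s') =
          (\<Sum>j\<in>{j. E i j}. Q i j s (a i) (a j))"
  shows "V_inf P r \<gamma> \<sigma> i h \<rho> = V_inf P r \<gamma> \<tau> i h \<rho>"
proof -
  have dec': "\<exists>Q. \<forall>a\<in>J. (\<lambda>_. r) h' i s a + \<gamma> * (\<Sum>s'\<in>UNIV. pmf ((\<lambda>_. P) h' s a) s' * V s')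
                 = (\<Sum>j\<in>{j. E i j}. Q j (a i) (a j))" for h' s V
  proof -
    obtain Q where "\<forall>i s a. a \<in> J \<longrightarrow>
          r i s a + \<gamma> * (\<Sum>s'\<in>UNIV. pmf (P s a) s' * V s') =
          (\<Sum>j\<in>{j. E i j}. Q i j s (a i) (a j))" using dec by blast
    then show ?thesis by (intro exI[of _ "\<lambda>j. Q i j s"]) auto
  qed
  have "Wf (\<lambda>_. P) (\<lambda>_. r) \<gamma> \<sigma> i T h \<rho> = Wf (\<lambda>_. P) (\<lambda>_. r) \<gamma> \<tau> i T h \<rho>" for T
    by (rule W_eq[where J=J and E=E and H="h+T" and P="\<lambda>_. P" and r="\<lambda>_. r" and \<gamma>=\<gamma>, OF fJ s\<sigma> s\<tau> mg dec']) auto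
  then show ?thesis by (simp add: V_inf_W)
qed

lemma V_eq_fin:
  fixes \<sigma> \<tau> :: "nat \<Rightarrow> 's::finite \<Rightarrow> ('i::finite \<Rightarrow> 'a) pmf"
  assumes fJ: "finite J" and s\<sigma>: "\<And>h s. set_pmf (\<sigma> h s) \<subseteq> J" and s\<tau>: "\<And>h s. set_pmf (\<tau> h s) \<subseteq> J"
    and mg: "\<And>h s j. E i j \<Longrightarrow> map_pmf (\<lambda>a. (a i, a j)) (\<sigma> h s) = map_pmf (\<lambda>a. (a i, a j)) (\<tau> h s)"
    and dec: "\<forall>V :: nat \<Rightarrow> 's \<Rightarrow> real. \<exists>Q :: nat \<Rightarrow> 'i \<Rightarrow> 'i \<Rightarrow> 's \<Rightarrow> 'a \<Rightarrow> 'a \<Rightarrow> real.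
        \<forall>h<H. \<forall>i s a. a \<in> J \<longrightarrow>
          r h i s a + \<gamma> * (\<Sum>s'\<in>UNIV. pmf (P h s a) s' * V (Suc h) s') =
          (\<Sum>j\<in>{j. E i j}. Q h i j s (a i) (a j))"
  shows "V_fin H P r \<gamma> \<sigma> i h \<rho> = V_fin H P r \<gamma> \<tau> i h \<rho>"
proof -
  have dec': "\<exists>Q. \<forall>a\<in>J. r h' i s a + \<gamma> * (\<Sum>s'\<in>UNIV. pmf (P h' s a) s' * V s')
                 = (\<Sum>j\<in>{j. E i j}. Q j (a i) (a j))" if "h' < H" for h' s V
  proof -
    obtain Q where "\<forall>h<H. \<forall>i s a. a \<in> J \<longrightarrow>
          r h i s a + \<gamma> * (\<Sum>s'\<in>UNIV. pmf (P h s a) s' * (\<lambda>_. V) (Suc h) s') =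
          (\<Sum>j\<in>{j. E i j}. Q h i j s (a i) (a j))" using dec[rule_format, of "\<lambda>_. V"] by blast
    then show ?thesis using that by (intro exI[of _ "\<lambda>j. Q h' i j s"]) auto
  qed
  have "V_fin H P r \<gamma> \<sigma> i h \<rho> = Wf P r \<gamma> \<sigma> i (H - h) h \<rho>" "V_fin H P r \<gamma> \<tau> i h \<rho> = Wf P r \<gamma> \<tau> i (H - h) h \<rho>"
    by (simp_all add: V_fin_def Wf_def)
  moreover have "Wf P r \<gamma> \<sigma> i (H - h) h \<rho> = Wf P r \<gamma> \<tau> i (H - h) h \<rho>"
  proof (cases "h \<le> H")
    case True
    then show ?thesis by (intro W_eq[where J=J and E=E and H=H and P=P and r=r and \<gamma>=\<gamma>, OF fJ s\<sigma> s\<tau> mg dec']) auto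
  next
    case False
    then show ?thesis by (simp add: Wf_def)
  qed
  ultimately show ?thesis by simp
qed

lemma abs_E_le:
  fixes f :: "'b \<Rightarrow> real"
  assumes "finite (set_pmf p)" and "\<And>x. x \<in> set_pmf p \<Longrightarrow> \<bar>f x\<bar> \<le> B"
  shows "\<bar>measure_pmf.expectation p f\<bar> \<le> B"
proof -
  have "measure_pmf.expectation p f \<le> B"
    using assms by (intro measure_pmf.integral_le_const)
      (auto simp: integrable_measure_pmf_finite AE_measure_pmf_iff abs_le_iff)
  moreover have "-B \<le> measure_pmf.expectation p f"
    using assms by (intro measure_pmf.integral_ge_const)
      (auto simp: integrable_measure_pmf_finite AE_measure_pmf_iff abs_le_iff minus_le_iff)
  ultimately show ?thesis by linarith
qed

lemma players_term_zero:
  fixes \<sigma> :: "'s::finite \<Rightarrow> ('i::finite \<Rightarrow> 'a) pmf" and d :: "'s pmf"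
  assumes fJ: "finite J" and s\<sigma>: "\<And>s. set_pmf (\<sigma> s) \<subseteq> J"
    and zs: "\<And>s a. a \<in> J \<Longrightarrow> (\<Sum>i\<in>UNIV. R i s a) = (0::real)"
  shows "(\<Sum>i\<in>UNIV. c * measure_pmf.expectation d (\<lambda>s. measure_pmf.expectation (\<sigma> s) (\<lambda>a. R i s a))) = 0"
proof -
  have f\<sigma>: "\<And>s. finite (set_pmf (\<sigma> s))" using s\<sigma> fJ finite_subset by blast
  have "(\<Sum>i\<in>UNIV. measure_pmf.expectation d (\<lambda>s. measure_pmf.expectation (\<sigma> s) (\<lambda>a. R i s a)))
     = measure_pmf.expectation d (\<lambda>s. \<Sum>i\<in>UNIV. measure_pmf.expectation (\<sigma> s) (\<lambda>a. R i s a))"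
    by (rule Bochner_Integration.integral_sum[symmetric]) (simp add: integrable_measure_pmf_finite)
  also have "\<dots> = measure_pmf.expectation d (\<lambda>s. measure_pmf.expectation (\<sigma> s) (\<lambda>a. \<Sum>i\<in>UNIV. R i s a))"
    by (intro Bochner_Integration.integral_cong refl Bochner_Integration.integral_sum[symmetric])
       (simp add: integrable_measure_pmf_finite f\<sigma>)
  also have "\<dots> = measure_pmf.expectation d (\<lambda>s. measure_pmf.expectation (\<sigma> s) (\<lambda>a. 0::real))"
    using s\<sigma> zs by (intro Bochner_Integration.integral_cong refl integral_cong_AE)
       (auto simp: AE_measure_pmf_iff)
  finally show ?thesis by (simp add: sum_distrib_left[symmetric])
qed

lemma zs_fin:
  fixes \<sigma> :: "nat \<Rightarrow> 's::finite \<Rightarrow> ('i::finite \<Rightarrow> 'a) pmf"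
  assumes fJ: "finite J" and s\<sigma>: "\<And>h s. set_pmf (\<sigma> h s) \<subseteq> J"
    and zs: "\<And>h s a. h < H \<Longrightarrow> a \<in> J \<Longrightarrow> (\<Sum>i\<in>UNIV. r h i s a) = 0"
  shows "(\<Sum>i\<in>UNIV. V_fin H P r \<gamma> \<sigma> i h \<rho>) = 0"
  unfolding V_fin_def
  by (subst sum.swap, rule sum.neutral, rule ballI, rule players_term_zero[OF fJ s\<sigma>], rule zs) auto

lemma zs_inf:
  fixes \<sigma> :: "nat \<Rightarrow> 's::finite \<Rightarrow> ('i::finite \<Rightarrow> 'a) pmf"
  assumes fJ: "finite J" and s\<sigma>: "\<And>h s. set_pmf (\<sigma> h s) \<subseteq> J"
    and zs: "\<And>s a. a \<in> J \<Longrightarrow> (\<Sum>i\<in>UNIV. r i s a) = 0"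
    and g0: "0 \<le> \<gamma>" and g1: "\<gamma> < 1"
  shows "(\<Sum>i\<in>UNIV. V_inf P r \<gamma> \<sigma> i h \<rho>) = 0"
proof -
  have f\<sigma>: "\<And>h s. finite (set_pmf (\<sigma> h s))" using s\<sigma> fJ finite_subset by blast
  define f where "f = (\<lambda>i t. \<gamma> ^ t * measure_pmf.expectation (state_dist_inf P \<sigma> h \<rho> t)
                    (\<lambda>s. measure_pmf.expectation (\<sigma> (h + t) s) (\<lambda>a. r i s a)))"
  have sm: "summable (f i)" for i
  proof -
    define B where "B = (\<Sum>s\<in>UNIV. \<Sum>a\<in>J. \<bar>r i s a\<bar>)"
    have rB: "\<bar>r i s a\<bar> \<le> B" if "a \<in> J" for s a
    proof -
      have "\<bar>r i s a\<bar> \<le> (\<Sum>a\<in>J. \<bar>r i s a\<bar>)"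
        using that fJ by (intro member_le_sum) auto
      also have "\<dots> \<le> B" unfolding B_def
        by (rule member_le_sum[where f="\<lambda>s. \<Sum>a\<in>J. \<bar>r i s a\<bar>"]) (auto intro: sum_nonneg)
      finally show ?thesis .
    qed
    have "norm (f i t) \<le> B * \<gamma> ^ t" for t
    proof -
      have "\<bar>measure_pmf.expectation (state_dist_inf P \<sigma> h \<rho> t)
                    (\<lambda>s. measure_pmf.expectation (\<sigma> (h + t) s) (\<lambda>a. r i s a))\<bar> \<le> B"
        by (intro abs_E_le) (auto intro!: abs_E_le f\<sigma> rB dest: subsetD[OF s\<sigma>])
      then show ?thesis unfolding f_def using g0
        by (simp add: abs_mult mult.commute[of B] mult_left_mono)
    qed
    moreover have "summable (\<lambda>t. B * \<gamma> ^ t)"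
      using g0 g1 by (intro summable_mult summable_geometric) simp
    ultimately show ?thesis using summable_comparison_test' by blast
  qed
  have "(\<Sum>i\<in>UNIV. V_inf P r \<gamma> \<sigma> i h \<rho>) = (\<Sum>t. \<Sum>i\<in>UNIV. f i t)"
    unfolding V_inf_def using suminf_sum[of UNIV f, OF sm] by (simp add: f_def)
  also have "\<dots> = (\<Sum>t. 0::real)"
    unfolding f_def by (subst players_term_zero[OF fJ s\<sigma> zs]) auto
  finally show ?thesis by simp
qed

lemma marg_Pi: "marg (Pi_pmf (UNIV :: 'i::finite set) d p) j = p j"
  unfolding marg_def by (simp add: Pi_pmf_component)

lemma pair_Pi:
  fixes p :: "'i::finite \<Rightarrow> 'a pmf"
  assumes "i \<noteq> j"
  shows "map_pmf (\<lambda>a. (a i, a j)) (Pi_pmf UNIV d p) = pair_pmf (p i) (p j)"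
proof -
  have U: "(UNIV :: 'i set) = insert i (UNIV - {i})" by auto
  have "map_pmf (\<lambda>a. (a i, a j)) (Pi_pmf UNIV d p) =
     map_pmf (\<lambda>a. (a i, a j)) (map_pmf (\<lambda>(y,f). f(i:=y)) (pair_pmf (p i) (Pi_pmf (UNIV - {i}) d p)))"
    by (subst U, subst Pi_pmf_insert) auto
  also have "\<dots> = map_pmf (\<lambda>(y, f). (id y, (\<lambda>f. f j) f)) (pair_pmf (p i) (Pi_pmf (UNIV - {i}) d p))"
    using assms by (auto simp: pmf.map_comp o_def intro!: map_pmf_cong)
  also have "\<dots> = pair_pmf (p i) (p j)"
    using assms by (subst map_pair) (simp add: Pi_pmf_component)
  finally show ?thesis .
qed

lemma dev_pair:
  assumes "i \<noteq> j"
  shows "map_pmf (\<lambda>a. (a i, a j)) (deviate i \<mu> \<sigma> h s) = pair_pmf (\<mu> h s) (marg (\<sigma> h s) j)"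
proof -
  have "map_pmf (\<lambda>a. (a i, a j)) (deviate i \<mu> \<sigma> h s) =
        map_pmf (\<lambda>(b, a). (id b, (\<lambda>a. a j) a)) (pair_pmf (\<mu> h s) (\<sigma> h s))"
    using assms unfolding deviate_def by (auto simp: pmf.map_comp o_def intro!: map_pmf_cong)
  also have "\<dots> = pair_pmf (\<mu> h s) (marg (\<sigma> h s) j)"
    by (subst map_pair) (simp add: marg_def)
  finally show ?thesis .
qed

lemma finite_joint: "action_sets_ok A \<Longrightarrow> finite (joint_actions (A :: 'i::finite \<Rightarrow> 'a set))"
proof -
  assume "action_sets_ok A"
  moreover have "joint_actions A = PiE UNIV A"
    by (auto simp: joint_actions_def PiE_def Pi_def extensional_def)
  ultimately show ?thesis by (auto simp: action_sets_ok_def intro!: finite_PiE)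
qed

lemma set_marg: "set_pmf (\<sigma> h s) \<subseteq> joint_actions A \<Longrightarrow> set_pmf (marg (\<sigma> h s) i) \<subseteq> A i"
  by (auto simp: marg_def joint_actions_def)

lemma set_marginalize:
  fixes \<pi> :: "nat \<Rightarrow> 's \<Rightarrow> ('i::finite \<Rightarrow> 'a) pmf"
  assumes "joint_policy A \<pi>"
  shows "set_pmf (marginalize \<pi> h s) \<subseteq> joint_actions A"
proof
  fix x assume x: "x \<in> set_pmf (marginalize \<pi> h s)"
  have m: "\<And>i. set_pmf (marg (\<pi> h s) i) \<subseteq> A i"
    using assms by (intro set_marg) (simp add: joint_policy_def)
  have "\<forall>i. x i \<in> set_pmf (marg (\<pi> h s) i)"
    using x by (simp add: marginalize_def set_Pi_pmf PiE_dflt_def)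
  then show "x \<in> joint_actions A" using m by (auto simp: joint_actions_def)
qed

lemma set_deviate:
  assumes "player_policy A i \<mu>" "\<And>h s. set_pmf (\<sigma> h s) \<subseteq> joint_actions A"
  shows "set_pmf (deviate i \<mu> \<sigma> h s) \<subseteq> joint_actions A"
  using assms by (fastforce simp: deviate_def player_policy_def joint_actions_def)

lemma final_arith:
  fixes D :: "'i::finite \<Rightarrow> real"
  assumes s: "(\<Sum>k\<in>UNIV. D k) = 0" and Dle: "\<And>k. D k \<le> \<epsilon>" and x: "x \<le> \<epsilon>"
  shows "x - D i \<le> (real CARD('i) + 1) * \<epsilon> \<and> 0 \<le> \<epsilon>"
proof -
  have "(\<Sum>k\<in>UNIV. D k) \<le> (\<Sum>k\<in>(UNIV::'i set). \<epsilon>)" by (intro sum_mono Dle)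
  then have "0 \<le> real CARD('i) * \<epsilon>" using s by simp
  then have e0: "0 \<le> \<epsilon>" by (simp add: zero_le_mult_iff)
  have "(\<Sum>k\<in>UNIV. D k) = D i + (\<Sum>k\<in>UNIV - {i}. D k)" by (simp add: sum.remove)
  moreover have "(\<Sum>k\<in>UNIV - {i}. D k) \<le> (\<Sum>k\<in>UNIV - {i}. \<epsilon>)" by (intro sum_mono Dle)
  moreover have "(\<Sum>k\<in>UNIV - {i}. \<epsilon>) \<le> (\<Sum>k\<in>(UNIV::'i set). \<epsilon>)"
    using e0 by (intro sum_mono2) auto
  ultimately have "- D i \<le> real CARD('i) * \<epsilon>" using s by simp
  then show ?thesis using x e0 by (simp add: algebra_simps)
qed

theorem proposition3:
  shows
  "(\<forall>(E :: 'i::finite \<Rightarrow> 'i \<Rightarrow> bool) (A :: 'i \<Rightarrow> 'a set) (P :: 's::finite \<Rightarrow> ('i \<Rightarrow> 'a) \<Rightarrow> 's pmf)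
       r \<gamma> \<pi> \<epsilon>.
       zero_sum_NMG_inf E A P r \<gamma> \<and> approx_CCE_inf A P r \<gamma> \<pi> \<epsilon> \<longrightarrow>
       approx_NE_inf A P r \<gamma> (marginalize \<pi>)
         ((real CARD('i) + 1) * \<epsilon> / (1 - \<gamma>)))
   \<and>
   (\<forall>H (E :: 'i \<Rightarrow> 'i \<Rightarrow> bool) (A :: 'i \<Rightarrow> 'a set) (P :: nat \<Rightarrow> 's \<Rightarrow> ('i \<Rightarrow> 'a) \<Rightarrow> 's pmf)
       r \<gamma> \<pi> \<epsilon>.
       zero_sum_NMG_fin H E A P r \<gamma> \<and> approx_CCE_fin H A P r \<gamma> \<pi> \<epsilon> \<longrightarrow>
       approx_NE_fin H A P r \<gamma> (marginalize \<pi>)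
         ((real CARD('i) + 1) * real H * \<epsilon>))"
proof (intro conjI allI impI)
  fix E :: "'i::finite \<Rightarrow> 'i \<Rightarrow> bool" and A :: "'i \<Rightarrow> 'a set" and P :: "'s::finite \<Rightarrow> ('i \<Rightarrow> 'a) \<Rightarrow> 's pmf"
    and r \<gamma> \<pi> \<epsilon>
  assume asm: "zero_sum_NMG_inf E A P r \<gamma> \<and> approx_CCE_inf A P r \<gamma> \<pi> \<epsilon>"
  define J where "J = joint_actions A"
  define \<pi>' where "\<pi>' = marginalize \<pi>"
  have aok: "action_sets_ok A" and g0: "0 \<le> \<gamma>" and g1: "\<gamma> < 1" and conn: "connected_graph E"
    and dec: "\<forall>V :: 's \<Rightarrow> real. \<exists>Q :: 'i \<Rightarrow> 'i \<Rightarrow> 's \<Rightarrow> 'a \<Rightarrow> 'a \<Rightarrow> real.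
        \<forall>i s a. a \<in> J \<longrightarrow>
          r i s a + \<gamma> * (\<Sum>s'\<in>UNIV. pmf (P s a) s' * V s') =
          (\<Sum>j\<in>{j. E i j}. Q i j s (a i) (a j))"
    and zsQ: "\<exists>Q :: 'i \<Rightarrow> 'i \<Rightarrow> 's \<Rightarrow> 'a \<Rightarrow> 'a \<Rightarrow> real.
        (\<forall>i s a. a \<in> J \<longrightarrow> r i s a = (\<Sum>j\<in>{j. E i j}. Q i j s (a i) (a j))) \<and>
        (\<forall>s a. a \<in> J \<longrightarrow> (\<Sum>i\<in>UNIV. \<Sum>j\<in>{j. E i j}. Q i j s (a i) (a j)) = 0)"
    using asm unfolding zero_sum_NMG_inf_def J_def by blast+
  have jp: "joint_policy A \<pi>"
    and cce: "\<And>i \<mu> h \<rho>. player_policy A i \<mu> \<Longrightarrow>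
        V_inf P r \<gamma> (deviate i \<mu> \<pi>) i h \<rho> - V_inf P r \<gamma> \<pi> i h \<rho> \<le> \<epsilon>"
    using asm unfolding approx_CCE_inf_def by blast+
  have fJ: "finite J" using finite_joint[OF aok] by (simp add: J_def)
  have s\<pi>: "\<And>h s. set_pmf (\<pi> h s) \<subseteq> J" using jp by (simp add: joint_policy_def J_def)
  have s\<pi>': "\<And>h s. set_pmf (\<pi>' h s) \<subseteq> J" using set_marginalize[OF jp] by (simp add: J_def \<pi>'_def)
  have zs: "\<And>s a. a \<in> J \<Longrightarrow> (\<Sum>i\<in>UNIV. r i s a) = 0"
  proof -
    fix s a assume a: "a \<in> J"
    obtain Q where Q: "\<forall>i s a. a \<in> J \<longrightarrow> r i s a = (\<Sum>j\<in>{j. E i j}. Q i j s (a i) (a j))"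
      "\<forall>s a. a \<in> J \<longrightarrow> (\<Sum>i\<in>UNIV. \<Sum>j\<in>{j. E i j}. Q i j s (a i) (a j)) = 0"
      using zsQ by blast
    then show "(\<Sum>i\<in>UNIV. r i s a) = 0" using a by simp
  qed
  have noloop: "\<And>i. \<not> E i i" using conn by (simp add: connected_graph_def)
  have pp: "player_policy A k (\<lambda>h s. marg (\<pi> h s) k)" for k
    using s\<pi> set_marg by (fastforce simp: player_policy_def J_def)
  show "approx_NE_inf A P r \<gamma> (marginalize \<pi>) ((real CARD('i) + 1) * \<epsilon> / (1 - \<gamma>))"
    unfolding approx_NE_inf_def approx_CCE_inf_def \<pi>'_def[symmetric]
  proof (intro conjI allI impI)
    show "joint_policy A \<pi>'" using s\<pi>' by (simp add: joint_policy_def J_def)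
    show "product_policy \<pi>'" by (auto simp: product_policy_def \<pi>'_def marginalize_def)
    fix i and \<mu> :: "nat \<Rightarrow> 's \<Rightarrow> 'a pmf" and h and \<rho> :: "'s pmf" assume \<mu>: "player_policy A i \<mu>"
    have sdev: "\<And>k \<mu> \<sigma> h s. player_policy A k \<mu> \<Longrightarrow> (\<And>h s. set_pmf (\<sigma> h s) \<subseteq> J) \<Longrightarrow>
        set_pmf (deviate k \<mu> \<sigma> h s) \<subseteq> J"
      unfolding J_def by (rule set_deviate)
    have eq1: "V_inf P r \<gamma> (deviate i \<mu> \<pi>') i h \<rho> = V_inf P r \<gamma> (deviate i \<mu> \<pi>) i h \<rho>"
    proof (rule V_eq_inf[where J=J and E=E, OF fJ _ _ _ dec])
      show "\<And>h s. set_pmf (deviate i \<mu> \<pi>' h s) \<subseteq> J" by (rule sdev[OF \<mu> s\<pi>'])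
      show "\<And>h s. set_pmf (deviate i \<mu> \<pi> h s) \<subseteq> J" by (rule sdev[OF \<mu> s\<pi>])
      fix h s j assume "E i j"
      then have "i \<noteq> j" using noloop by auto
      then show "map_pmf (\<lambda>a. (a i, a j)) (deviate i \<mu> \<pi>' h s) = map_pmf (\<lambda>a. (a i, a j)) (deviate i \<mu> \<pi> h s)"
        by (simp add: dev_pair \<pi>'_def marginalize_def marg_Pi)
    qed
    have eq2: "V_inf P r \<gamma> \<pi>' k h \<rho> = V_inf P r \<gamma> (deviate k (\<lambda>h s. marg (\<pi> h s) k) \<pi>) k h \<rho>" for k
    proof (rule V_eq_inf[where J=J and E=E, OF fJ s\<pi>' _ _ dec])
      show "\<And>h s. set_pmf (deviate k (\<lambda>h s. marg (\<pi> h s) k) \<pi> h s) \<subseteq> J" by (rule sdev[OF pp s\<pi>])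
      fix h s j assume "E k j"
      then have "k \<noteq> j" using noloop by auto
      then show "map_pmf (\<lambda>a. (a k, a j)) (\<pi>' h s) = map_pmf (\<lambda>a. (a k, a j)) (deviate k (\<lambda>h s. marg (\<pi> h s) k) \<pi> h s)"
        by (simp add: dev_pair \<pi>'_def marginalize_def pair_Pi)
    qed
    define D where "D = (\<lambda>k. V_inf P r \<gamma> \<pi>' k h \<rho> - V_inf P r \<gamma> \<pi> k h \<rho>)"
    have sD: "(\<Sum>k\<in>UNIV. D k) = 0"
      unfolding D_def sum_subtractf using zs_inf[where r=r and P=P and h=h and \<rho>=\<rho> and \<gamma>=\<gamma> and \<sigma>=\<pi>', OF fJ s\<pi>' zs g0 g1]
        zs_inf[where r=r and P=P and h=h and \<rho>=\<rho> and \<gamma>=\<gamma> and \<sigma>=\<pi>, OF fJ s\<pi> zs g0 g1] by simp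
    have Dle: "D k \<le> \<epsilon>" for k unfolding D_def eq2 using cce[OF pp] .
    from final_arith[OF sD Dle cce[OF \<mu>, of h \<rho>], of i]
    have fa: "V_inf P r \<gamma> (deviate i \<mu> \<pi>) i h \<rho> - V_inf P r \<gamma> \<pi> i h \<rho> - D i \<le> (real CARD('i) + 1) * \<epsilon>"
      and e0: "0 \<le> \<epsilon>" by auto
    have "V_inf P r \<gamma> (deviate i \<mu> \<pi>') i h \<rho> - V_inf P r \<gamma> \<pi>' i h \<rho> \<le> (real CARD('i) + 1) * \<epsilon>"
      using fa unfolding eq1 D_def by simp
    also have "\<dots> \<le> (real CARD('i) + 1) * \<epsilon> / (1 - \<gamma>)"
      using g0 g1 e0 by (simp add: le_divide_eq mult_left_le)
    finally show "V_inf P r \<gamma> (deviate i \<mu> \<pi>') i h \<rho> - V_inf P r \<gamma> \<pi>' i h \<rho> \<le> (real CARD('i) + 1) * \<epsilon> / (1 - \<gamma>)" .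
  qed
next
  fix H and E :: "'i::finite \<Rightarrow> 'i \<Rightarrow> bool" and A :: "'i \<Rightarrow> 'a set" and P :: "nat \<Rightarrow> 's::finite \<Rightarrow> ('i \<Rightarrow> 'a) \<Rightarrow> 's pmf"
    and r \<gamma> \<pi> \<epsilon>
  assume asm: "zero_sum_NMG_fin H E A P r \<gamma> \<and> approx_CCE_fin H A P r \<gamma> \<pi> \<epsilon>"
  define J where "J = joint_actions A"
  define \<pi>' where "\<pi>' = marginalize \<pi>"
  have aok: "action_sets_ok A" and conn: "connected_graph E"
    and dec: "\<forall>V :: nat \<Rightarrow> 's \<Rightarrow> real. \<exists>Q :: nat \<Rightarrow> 'i \<Rightarrow> 'i \<Rightarrow> 's \<Rightarrow> 'a \<Rightarrow> 'a \<Rightarrow> real.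
        \<forall>h<H. \<forall>i s a. a \<in> J \<longrightarrow>
          r h i s a + \<gamma> * (\<Sum>s'\<in>UNIV. pmf (P h s a) s' * V (Suc h) s') =
          (\<Sum>j\<in>{j. E i j}. Q h i j s (a i) (a j))"
    and zsQ: "\<exists>Q :: nat \<Rightarrow> 'i \<Rightarrow> 'i \<Rightarrow> 's \<Rightarrow> 'a \<Rightarrow> 'a \<Rightarrow> real.
        (\<forall>h<H. \<forall>i s a. a \<in> J \<longrightarrow> r h i s a = (\<Sum>j\<in>{j. E i j}. Q h i j s (a i) (a j))) \<and>
        (\<forall>h<H. \<forall>s a. a \<in> J \<longrightarrow>
           (\<Sum>i\<in>UNIV. \<Sum>j\<in>{j. E i j}. Q h i j s (a i) (a j)) = 0)"
    using asm unfolding zero_sum_NMG_fin_def J_def by blast+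
  have jp: "joint_policy A \<pi>"
    and cce: "\<And>i \<mu> h \<rho>. player_policy A i \<mu> \<Longrightarrow> h < H \<Longrightarrow>
        V_fin H P r \<gamma> (deviate i \<mu> \<pi>) i h \<rho> - V_fin H P r \<gamma> \<pi> i h \<rho> \<le> \<epsilon>"
    using asm unfolding approx_CCE_fin_def by blast+
  have fJ: "finite J" using finite_joint[OF aok] by (simp add: J_def)
  have s\<pi>: "\<And>h s. set_pmf (\<pi> h s) \<subseteq> J" using jp by (simp add: joint_policy_def J_def)
  have s\<pi>': "\<And>h s. set_pmf (\<pi>' h s) \<subseteq> J" using set_marginalize[OF jp] by (simp add: J_def \<pi>'_def)
  have zs: "\<And>h s a. h < H \<Longrightarrow> a \<in> J \<Longrightarrow> (\<Sum>i\<in>UNIV. r h i s a) = 0"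
  proof -
    fix h s a assume h: "h < H" and a: "a \<in> J"
    obtain Q where Q: "\<forall>h<H. \<forall>i s a. a \<in> J \<longrightarrow> r h i s a = (\<Sum>j\<in>{j. E i j}. Q h i j s (a i) (a j))"
      "\<forall>h<H. \<forall>s a. a \<in> J \<longrightarrow> (\<Sum>i\<in>UNIV. \<Sum>j\<in>{j. E i j}. Q h i j s (a i) (a j)) = 0"
      using zsQ by blast
    then show "(\<Sum>i\<in>UNIV. r h i s a) = 0" using a h by simp
  qed
  have noloop: "\<And>i. \<not> E i i" using conn by (simp add: connected_graph_def)
  have pp: "player_policy A k (\<lambda>h s. marg (\<pi> h s) k)" for k
    using s\<pi> set_marg by (fastforce simp: player_policy_def J_def)
  show "approx_NE_fin H A P r \<gamma> (marginalize \<pi>) ((real CARD('i) + 1) * real H * \<epsilon>)"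
    unfolding approx_NE_fin_def approx_CCE_fin_def \<pi>'_def[symmetric]
  proof (intro conjI allI impI)
    show "joint_policy A \<pi>'" using s\<pi>' by (simp add: joint_policy_def J_def)
    show "product_policy \<pi>'" by (auto simp: product_policy_def \<pi>'_def marginalize_def)
    fix i and \<mu> :: "nat \<Rightarrow> 's \<Rightarrow> 'a pmf" and h and \<rho> :: "'s pmf" assume \<mu>: "player_policy A i \<mu>" and hH: "h < H"
    have sdev: "\<And>k \<mu> \<sigma> h s. player_policy A k \<mu> \<Longrightarrow> (\<And>h s. set_pmf (\<sigma> h s) \<subseteq> J) \<Longrightarrow>
        set_pmf (deviate k \<mu> \<sigma> h s) \<subseteq> J"
      unfolding J_def by (rule set_deviate)
    have eq1: "V_fin H P r \<gamma> (deviate i \<mu> \<pi>') i h \<rho> = V_fin H P r \<gamma> (deviate i \<mu> \<pi>) i h \<rho>"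
    proof (rule V_eq_fin[where J=J and E=E, OF fJ _ _ _ dec])
      show "\<And>h s. set_pmf (deviate i \<mu> \<pi>' h s) \<subseteq> J" by (rule sdev[OF \<mu> s\<pi>'])
      show "\<And>h s. set_pmf (deviate i \<mu> \<pi> h s) \<subseteq> J" by (rule sdev[OF \<mu> s\<pi>])
      fix h s j assume "E i j"
      then have "i \<noteq> j" using noloop by auto
      then show "map_pmf (\<lambda>a. (a i, a j)) (deviate i \<mu> \<pi>' h s) = map_pmf (\<lambda>a. (a i, a j)) (deviate i \<mu> \<pi> h s)"
        by (simp add: dev_pair \<pi>'_def marginalize_def marg_Pi)
    qed
    have eq2: "V_fin H P r \<gamma> \<pi>' k h \<rho> = V_fin H P r \<gamma> (deviate k (\<lambda>h s. marg (\<pi> h s) k) \<pi>) k h \<rho>" for k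
    proof (rule V_eq_fin[where J=J and E=E, OF fJ s\<pi>' _ _ dec])
      show "\<And>h s. set_pmf (deviate k (\<lambda>h s. marg (\<pi> h s) k) \<pi> h s) \<subseteq> J" by (rule sdev[OF pp s\<pi>])
      fix h s j assume "E k j"
      then have "k \<noteq> j" using noloop by auto
      then show "map_pmf (\<lambda>a. (a k, a j)) (\<pi>' h s) = map_pmf (\<lambda>a. (a k, a j)) (deviate k (\<lambda>h s. marg (\<pi> h s) k) \<pi> h s)"
        by (simp add: dev_pair \<pi>'_def marginalize_def pair_Pi)
    qed
    define D where "D = (\<lambda>k. V_fin H P r \<gamma> \<pi>' k h \<rho> - V_fin H P r \<gamma> \<pi> k h \<rho>)"
    have sD: "(\<Sum>k\<in>UNIV. D k) = 0"
      unfolding D_def sum_subtractf using zs_fin[where r=r and P=P and h=h and \<rho>=\<rho> and \<gamma>=\<gamma> and H=H and \<sigma>=\<pi>', OF fJ s\<pi>' zs]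
        zs_fin[where r=r and P=P and h=h and \<rho>=\<rho> and \<gamma>=\<gamma> and H=H and \<sigma>=\<pi>, OF fJ s\<pi> zs] by simp
    have Dle: "D k \<le> \<epsilon>" for k unfolding D_def eq2 using cce[OF pp hH] .
    from final_arith[OF sD Dle cce[OF \<mu> hH, of \<rho>], of i]
    have fa: "V_fin H P r \<gamma> (deviate i \<mu> \<pi>) i h \<rho> - V_fin H P r \<gamma> \<pi> i h \<rho> - D i \<le> (real CARD('i) + 1) * \<epsilon>"
      and e0: "0 \<le> \<epsilon>" by auto
    have "V_fin H P r \<gamma> (deviate i \<mu> \<pi>') i h \<rho> - V_fin H P r \<gamma> \<pi>' i h \<rho> \<le> (real CARD('i) + 1) * \<epsilon>"
      using fa unfolding eq1 D_def by simp
    also have "\<dots> \<le> (real CARD('i) + 1) * real H * \<epsilon>"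
    proof -
      have "(real CARD('i) + 1) * \<epsilon> * 1 \<le> (real CARD('i) + 1) * \<epsilon> * real H"
        using hH e0 by (intro mult_left_mono) auto
      then show ?thesis by (simp add: mult_ac)
    qed
    finally show "V_fin H P r \<gamma> (deviate i \<mu> \<pi>') i h \<rho> - V_fin H P r \<gamma> \<pi>' i h \<rho> \<le> (real CARD('i) + 1) * real H * \<epsilon>" .
  qed
qed

end
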